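(* Let $A=(a_1\ a_2\ a_3\ a_4)$ be a matrix of positive integers that admits a gluing of the first kind in the order $(a_1,a_2,a_3,a_4)$ (type $(((a_1\circ a_2)\circ a_3)\circ a_4)$). Let $M$ be a minimal Markov basis of $A$ consisting of $b=(b_1,-b_2,0,0)$, $c=(c_1,c_2,-c_3,0)$, $d=(d_1,d_2,d_3,-d_4)$, where $b_1,b_2,c_3,d_4>0$ and $c_1,c_2,d_1,d_2,d_3\ge0$ are integers, and assume $b_1>b_2$. Then $M$ is distance reducing if and only if all of the following hold: (a) $c_1<c_2+c_3$; (b) ($c_1=0$ and $c_3<c_2$) or $d_1+d_3<d_2+d_4$; (c) $c_1+c_2<c_3$ or $d_1+d_2<d_3+d_4$.
   Context: $A$ admits a gluing of the first kind in the order $(a_1,\dots,a_4)$ if for each $k\in\{1,2,3\}$ there exists $x\in\mathbb N\{a_1,\dots,a_k\}\cap a_{k+1}\mathbb N$ with $x\mathbb Z=\mathbb Z\{a_1,\dots,a_k\}\cap a_{k+1}\mathbb Z$. For $z\in\mathbb Z^n$, $z^\pm\in\mathbb N^n$ are the unique vectors with disjoint supports and $z=z^+-z^-$; $\|\cdot\|$ is the $1$-norm. A Markov basis is a set $B\subseteq\ker(A)$ whose binomials $x^{u^+}-x^{u^-}$ generate the toric ideal $I_A$; minimal means no proper subset is one. For nonzero $z\in\ker(A)$, $u$ reduces the distance of $z$ if there exist $(p,q)\in\{(z^+,z^-),(z^-,z^+)\}$ and $\varepsilon\in\{\pm1\}$ with $p+\varepsilon u\in\mathbb N^n$ and $\|p+\varepsilon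 u-q\|<\|z\|$; $B$ is distance reducing if every nonzero $z\in\ker(A)$ has its distance reduced by some element of $B$. *)

theory Defs
  imports Main "HOL-Library.Poly_Mapping"
begin

text \<open>Vectors in Z^n are functions nat => int supported on the index set {1..n}
  (indices as in the paper, starting from 1).  A = (a_1 ... a_n) is a function a :: nat => int.\<close>

definition intvecs :: "nat \<Rightarrow> (nat \<Rightarrow> int) set" where
  "intvecs n = {z. \<forall>i. i \<notin> {1..n} \<longrightarrow> z i = 0}"

definition kerA :: "(nat \<Rightarrow> int) \<Rightarrow> nat \<Rightarrow> (nat \<Rightarrow> int) set" where
  "kerA a n = {z \<in> intvecs n. (\<Sum>i=1..n. a i * z i) = 0}"

definition vplus :: "(nat \<Rightarrow> int) \<Rightarrow> (nat \<Rightarrow> int)" where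
  "vplus z = (\<lambda>i. max (z i) 0)"

definition vminus :: "(nat \<Rightarrow> int) \<Rightarrow> (nat \<Rightarrow> int)" where
  "vminus z = (\<lambda>i. max (- z i) 0)"

definition norm1 :: "nat \<Rightarrow> (nat \<Rightarrow> int) \<Rightarrow> int" where
  "norm1 n z = (\<Sum>i=1..n. \<bar>z i\<bar>)"

definition nat_comb :: "(nat \<Rightarrow> int) \<Rightarrow> nat \<Rightarrow> int set" where
  "nat_comb a k = {x. \<exists>l :: nat \<Rightarrow> nat. x = (\<Sum>i=1..k. int (l i) * a i)}"

definition int_comb :: "(nat \<Rightarrow> int) \<Rightarrow> nat \<Rightarrow> int set" where
  "int_comb a k = {x. \<exists>l :: nat \<Rightarrow> int. x = (\<Sum>i=1..k. l i * a i)}"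

definition gluing_first_kind :: "(nat \<Rightarrow> int) \<Rightarrow> nat \<Rightarrow> bool" where
  "gluing_first_kind a n \<longleftrightarrow>
     (\<forall>k\<in>{1..<n}. \<exists>x. x \<in> nat_comb a k \<and> x \<in> {a (Suc k) * int m | m. True} \<and>
        {x * m | m :: int. True} = int_comb a k \<inter> {a (Suc k) * m | m :: int. True})"

definition monom :: "nat \<Rightarrow> (nat \<Rightarrow> nat) \<Rightarrow> ((nat \<Rightarrow>\<^sub>0 nat) \<Rightarrow>\<^sub>0 'k::field)" where
  "monom n u = Poly_Mapping.single (\<Sum>i=1..n. Poly_Mapping.single i (u i)) 1"

definition binom :: "nat \<Rightarrow> (nat \<Rightarrow> int) \<Rightarrow> ((nat \<Rightarrow>\<^sub>0 nat) \<Rightarrow>\<^sub>0 'k::field)" where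
  "binom n z = monom n (\<lambda>i. nat (vplus z i)) - monom n (\<lambda>i. nat (vminus z i))"

definition ideal_gen :: "'r::comm_ring_1 set \<Rightarrow> 'r set" where
  "ideal_gen G = {(\<Sum>g\<in>t. r g * g) | t r. finite t \<and> t \<subseteq> G}"

definition toric_ideal :: "'k itself \<Rightarrow> (nat \<Rightarrow> int) \<Rightarrow> nat \<Rightarrow> ((nat \<Rightarrow>\<^sub>0 nat) \<Rightarrow>\<^sub>0 'k::field) set" where
  "toric_ideal _ a n = ideal_gen {monom n u - monom n v | u v.
      (\<Sum>i=1..n. a i * int (u i)) = (\<Sum>i=1..n. a i * int (v i))}"

definition markov_basis :: "'k::field itself \<Rightarrow> (nat \<Rightarrow> int) \<Rightarrow> nat \<Rightarrow> (nat \<Rightarrow> int) set \<Rightarrow> bool" where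
  "markov_basis K a n B \<longleftrightarrow> B \<subseteq> kerA a n \<and>
     ideal_gen ((binom n :: _ \<Rightarrow> ((nat \<Rightarrow>\<^sub>0 nat) \<Rightarrow>\<^sub>0 'k)) ` B) = toric_ideal K a n"

definition minimal_markov_basis :: "'k::field itself \<Rightarrow> (nat \<Rightarrow> int) \<Rightarrow> nat \<Rightarrow> (nat \<Rightarrow> int) set \<Rightarrow> bool" where
  "minimal_markov_basis K a n B \<longleftrightarrow> markov_basis K a n B \<and> (\<forall>B'. B' \<subset> B \<longrightarrow> \<not> markov_basis K a n B')"

definition reduces_distance :: "nat \<Rightarrow> (nat \<Rightarrow> int) \<Rightarrow> (nat \<Rightarrow> int) \<Rightarrow> bool" where
  "reduces_distance n u z \<longleftrightarrow>
     (\<exists>(p, q) \<in> {(vplus z, vminus z), (vminus z, vplus z)}. \<exists>e \<in> {1, -1 :: int}.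
        (\<forall>i\<in>{1..n}. p i + e * u i \<ge> 0) \<and>
        norm1 n (\<lambda>i. p i + e * u i - q i) < norm1 n z)"

definition distance_reducing :: "(nat \<Rightarrow> int) \<Rightarrow> nat \<Rightarrow> (nat \<Rightarrow> int) set \<Rightarrow> bool" where
  "distance_reducing a n B \<longleftrightarrow>
     (\<forall>z \<in> kerA a n. z \<noteq> (\<lambda>_. 0) \<longrightarrow> (\<exists>u\<in>B. reduces_distance n u z))"

definition vec4 :: "int \<Rightarrow> int \<Rightarrow> int \<Rightarrow> int \<Rightarrow> (nat \<Rightarrow> int)" where
  "vec4 x1 x2 x3 x4 = (\<lambda>i. if i = 1 then x1 else if i = 2 then x2 else if i = 3 then x3
                          else if i = 4 then x4 else 0)"

end

theory Submission
  imports Defs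
begin


definition inL :: "(nat \<Rightarrow> int) \<Rightarrow> (nat \<Rightarrow> int) \<Rightarrow> (nat \<Rightarrow> int) \<Rightarrow> (nat \<Rightarrow> int) \<Rightarrow> bool" where
  "inL vb vc vd z \<longleftrightarrow> (\<exists>i j k. \<forall>t. z t = i * vb t + j * vc t + k * vd t)"

lemma inL_add: "inL vb vc vd x \<Longrightarrow> inL vb vc vd y \<Longrightarrow> inL vb vc vd (\<lambda>t. x t + y t)"
proof -
  assume "inL vb vc vd x" "inL vb vc vd y"
  then obtain i j k i' j' k' where "\<forall>t. x t = i * vb t + j * vc t + k * vd t"
     "\<forall>t. y t = i' * vb t + j' * vc t + k' * vd t" unfolding inL_def by blast
  then show ?thesis unfolding inL_def
    by (intro exI[of _ "i+i'"] exI[of _ "j+j'"] exI[of _ "k+k'"]) (simp add: algebra_simps)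
qed

lemma inL_neg: "inL vb vc vd x \<Longrightarrow> inL vb vc vd (\<lambda>t. - x t)"
proof -
  assume "inL vb vc vd x"
  then obtain i j k where "\<forall>t. x t = i * vb t + j * vc t + k * vd t" unfolding inL_def by blast
  then show ?thesis unfolding inL_def
    by (intro exI[of _ "-i"] exI[of _ "-j"] exI[of _ "-k"]) (simp add: algebra_simps)
qed

lemma inL_zero: "inL vb vc vd (\<lambda>t. 0)"
  unfolding inL_def by (rule exI[of _ 0], rule exI[of _ 0], rule exI[of _ 0]) simp

definition rel :: "(nat \<Rightarrow> int) \<Rightarrow> (nat \<Rightarrow> int) \<Rightarrow> (nat \<Rightarrow> int) \<Rightarrow> (nat \<Rightarrow>\<^sub>0 nat) \<Rightarrow> (nat \<Rightarrow>\<^sub>0 nat) \<Rightarrow> bool" where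
  "rel vb vc vd m m' \<longleftrightarrow> inL vb vc vd (\<lambda>t. int (Poly_Mapping.lookup m t) - int (Poly_Mapping.lookup m' t))"

lemma rel_shift:
  assumes "rel vb vc vd p q"
  shows "rel vb vc vd (s + p) m0 \<longleftrightarrow> rel vb vc vd (s + q) m0"
proof -
  have e1: "(\<lambda>t. int (Poly_Mapping.lookup (s + p) t) - int (Poly_Mapping.lookup m0 t)) =
     (\<lambda>t. (int (Poly_Mapping.lookup (s + q) t) - int (Poly_Mapping.lookup m0 t)) + (int (Poly_Mapping.lookup p t) - int (Poly_Mapping.lookup q t)))"
    by (auto simp: Poly_Mapping.lookup_add)
  have e2: "(\<lambda>t. int (Poly_Mapping.lookup (s + q) t) - int (Poly_Mapping.lookup m0 t)) =
     (\<lambda>t. (int (Poly_Mapping.lookup (s + p) t) - int (Poly_Mapping.lookup m0 t)) + - (int (Poly_Mapping.lookup p t) - int (Poly_Mapping.lookup q t)))"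
    by (auto simp: Poly_Mapping.lookup_add)
  have pq: "inL vb vc vd (\<lambda>t. int (Poly_Mapping.lookup p t) - int (Poly_Mapping.lookup q t))" using assms unfolding rel_def .
  show ?thesis unfolding rel_def
  proof
    assume "inL vb vc vd (\<lambda>t. int (Poly_Mapping.lookup (s + p) t) - int (Poly_Mapping.lookup m0 t))"
    from inL_add[OF this inL_neg[OF pq]] show "inL vb vc vd (\<lambda>t. int (Poly_Mapping.lookup (s + q) t) - int (Poly_Mapping.lookup m0 t))"
      by (simp add: Poly_Mapping.lookup_add algebra_simps)
  next
    assume "inL vb vc vd (\<lambda>t. int (Poly_Mapping.lookup (s + q) t) - int (Poly_Mapping.lookup m0 t))"
    from inL_add[OF this pq] show "inL vb vc vd (\<lambda>t. int (Poly_Mapping.lookup (s + p) t) - int (Poly_Mapping.lookup m0 t))"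
      by (simp add: Poly_Mapping.lookup_add algebra_simps)
  qed
qed

definition psi :: "(nat \<Rightarrow> int) \<Rightarrow> (nat \<Rightarrow> int) \<Rightarrow> (nat \<Rightarrow> int) \<Rightarrow> (nat \<Rightarrow>\<^sub>0 nat) \<Rightarrow> ((nat \<Rightarrow>\<^sub>0 nat) \<Rightarrow>\<^sub>0 'k::field) \<Rightarrow> 'k" where
  "psi vb vc vd m0 f = (\<Sum>m\<in>Poly_Mapping.keys f. if rel vb vc vd m m0 then Poly_Mapping.lookup f m else 0)"

lemma psi_superset:
  assumes "finite S" "Poly_Mapping.keys f \<subseteq> S"
  shows "psi vb vc vd m0 f = (\<Sum>m\<in>S. if rel vb vc vd m m0 then Poly_Mapping.lookup f m else 0)"
  unfolding psi_def
  by (rule sum.mono_neutral_left[OF assms]) (auto simp: in_keys_iff)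

lemma psi_add: "psi vb vc vd m0 (f + g) = psi vb vc vd m0 f + psi vb vc vd m0 g"
proof -
  let ?S = "Poly_Mapping.keys f \<union> Poly_Mapping.keys g"
  have fin: "finite ?S" by simp
  have "psi vb vc vd m0 (f + g) = (\<Sum>m\<in>?S. if rel vb vc vd m m0 then Poly_Mapping.lookup (f+g) m else 0)"
    by (rule psi_superset[OF fin keys_add])
  also have "\<dots> = (\<Sum>m\<in>?S. if rel vb vc vd m m0 then Poly_Mapping.lookup f m else 0) + (\<Sum>m\<in>?S. if rel vb vc vd m m0 then Poly_Mapping.lookup g m else 0)"
    by (simp add: Poly_Mapping.lookup_add sum.distrib[symmetric] if_distrib)
      (rule sum.cong, auto simp: Poly_Mapping.lookup_add)
  also have "\<dots> = psi vb vc vd m0 f + psi vb vc vd m0 g"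
    by (simp add: psi_superset[OF fin])
  finally show ?thesis .
qed

lemma psi_zero: "psi vb vc vd m0 0 = 0"
  unfolding psi_def by simp

lemma psi_neg: "psi vb vc vd m0 (- f) = - psi vb vc vd m0 f"
  using psi_add[of vb vc vd m0 f "-f"] by (simp add: psi_zero eq_neg_iff_add_eq_0 add.commute)

lemma psi_diff: "psi vb vc vd m0 (f - g) = psi vb vc vd m0 f - psi vb vc vd m0 g"
  using psi_add[of vb vc vd m0 f "-g"] psi_neg[of vb vc vd m0 g] by simp

lemma psi_sum: "psi vb vc vd m0 (sum F A) = (\<Sum>x\<in>A. psi vb vc vd m0 (F x))"
  by (induction A rule: infinite_finite_induct) (auto simp: psi_zero psi_add)

lemma psi_single: "psi vb vc vd m0 (Poly_Mapping.single m c) = (if rel vb vc vd m m0 then c else 0)"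
  unfolding psi_def by (cases "c = 0") auto

lemma poly_expand: "f = (\<Sum>m\<in>Poly_Mapping.keys f. Poly_Mapping.single m (Poly_Mapping.lookup f m))"
proof (rule poly_mapping_eqI)
  fix k
  show "Poly_Mapping.lookup f k = Poly_Mapping.lookup (\<Sum>m\<in>Poly_Mapping.keys f. Poly_Mapping.single m (Poly_Mapping.lookup f m)) k"
    by (simp add: lookup_sum lookup_single when_def in_keys_iff)
qed

lemma psi_mult_binom:
  assumes "rel vb vc vd p q"
  shows "psi vb vc vd m0 (r * (Poly_Mapping.single p 1 - Poly_Mapping.single q 1)) = 0"
proof -
  have "r * (Poly_Mapping.single p 1 - Poly_Mapping.single q 1) = (\<Sum>s\<in>Poly_Mapping.keys r. Poly_Mapping.single s (Poly_Mapping.lookup r s)) * (Poly_Mapping.single p 1 - Poly_Mapping.single q 1)"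
    by (subst poly_expand[of r]) simp
  also have "\<dots> = (\<Sum>s\<in>Poly_Mapping.keys r. Poly_Mapping.single (s + p) (Poly_Mapping.lookup r s) - Poly_Mapping.single (s + q) (Poly_Mapping.lookup r s))"
    by (simp add: sum_distrib_right right_diff_distrib mult_single sum_subtractf)
  finally have "psi vb vc vd m0 (r * (Poly_Mapping.single p 1 - Poly_Mapping.single q 1)) =
     (\<Sum>s\<in>Poly_Mapping.keys r. psi vb vc vd m0 (Poly_Mapping.single (s + p) (Poly_Mapping.lookup r s) - Poly_Mapping.single (s + q) (Poly_Mapping.lookup r s)))"
    by (simp add: psi_sum)
  also have "\<dots> = 0"
    by (rule sum.neutral) (auto simp: psi_diff psi_single rel_shift[OF assms])
  finally show ?thesis .
qed

lemma lookup_E: "Poly_Mapping.lookup (\<Sum>i=1..(n::nat). Poly_Mapping.single i (w i)) t = (if t \<in> {1..n} then w t else 0)"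
  proof -
  have "Poly_Mapping.lookup (\<Sum>i=1..n. Poly_Mapping.single i (w i)) t = (\<Sum>i\<in>{1..n}. if i = t then w i else 0)"
    unfolding lookup_sum lookup_single when_def by (rule sum.cong) auto
  also have "\<dots> = (if t \<in> {1..n} then w t else 0)" by (rule sum.delta) simp
  finally show ?thesis .
qed

lemma binom_eq: "binom n u = Poly_Mapping.single (\<Sum>i=1..n. Poly_Mapping.single i (nat (vplus u i))) 1
   - Poly_Mapping.single (\<Sum>i=1..n. Poly_Mapping.single i (nat (vminus u i))) 1"
  by (simp add: binom_def monom_def)

lemma diff_E:
  assumes "u \<in> intvecs n"
  shows "(\<lambda>t. int (Poly_Mapping.lookup (\<Sum>i=1..n. Poly_Mapping.single i (nat (vplus u i))) t)
      - int (Poly_Mapping.lookup (\<Sum>i=1..n. Poly_Mapping.single i (nat (vminus u i))) t)) = u"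
proof
  fix t
  show "int (Poly_Mapping.lookup (\<Sum>i=1..n. Poly_Mapping.single i (nat (vplus u i))) t)
      - int (Poly_Mapping.lookup (\<Sum>i=1..n. Poly_Mapping.single i (nat (vminus u i))) t) = u t"
    using assms unfolding lookup_E by (auto simp: vplus_def vminus_def intvecs_def)
qed

lemma inL_b: "inL vb vc vd vb" unfolding inL_def
  by (intro exI[of _ 1] exI[of _ 0]) simp
lemma inL_c: "inL vb vc vd vc" unfolding inL_def
  by (intro exI[of _ 0] exI[of _ 1]) simp
lemma inL_d: "inL vb vc vd vd" unfolding inL_def
  by (intro exI[of _ 0] exI[of _ 1]) simp

lemma psi_ideal:
  assumes iv: "{vb, vc, vd} \<subseteq> intvecs 4"
    and f: "f \<in> ideal_gen ((binom 4 :: _ \<Rightarrow> ((nat \<Rightarrow>\<^sub>0 nat) \<Rightarrow>\<^sub>0 'k::field)) ` {vb, vc, vd})"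
  shows "psi vb vc vd m0 f = 0"
proof -
  obtain t r where f_eq: "f = (\<Sum>g\<in>t. r g * g)" and fin: "finite t"
    and tsub: "t \<subseteq> (binom 4 :: _ \<Rightarrow> ((nat \<Rightarrow>\<^sub>0 nat) \<Rightarrow>\<^sub>0 'k)) ` {vb, vc, vd}"
    using f unfolding ideal_gen_def by blast
  have "psi vb vc vd m0 (r g * g) = 0" if "g \<in> t" for g
  proof -
    from that tsub obtain u where u: "u \<in> {vb, vc, vd}" and g: "g = binom 4 u" by blast
    have ui: "u \<in> intvecs 4" using u iv by blast
    have iu: "inL vb vc vd u" using u inL_b inL_c inL_d by blast
    have "rel vb vc vd (\<Sum>i=1..4. Poly_Mapping.single i (nat (vplus u i))) (\<Sum>i=1..4. Poly_Mapping.single i (nat (vminus u i)))"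
      unfolding rel_def diff_E[OF ui] by (rule iu)
    then show ?thesis unfolding g binom_eq by (rule psi_mult_binom)
  qed
  then show ?thesis unfolding f_eq psi_sum by simp
qed

lemma markov_lattice:
  assumes mk: "markov_basis TYPE('k::field) a 4 {vb, vc, vd}"
    and z: "z \<in> kerA a 4"
  shows "inL vb vc vd z"
proof -
  have sub: "{vb, vc, vd} \<subseteq> kerA a 4"
    and ideq: "ideal_gen ((binom 4 :: _ \<Rightarrow> ((nat \<Rightarrow>\<^sub>0 nat) \<Rightarrow>\<^sub>0 'k)) ` {vb, vc, vd}) = toric_ideal TYPE('k) a 4"
    using mk unfolding markov_basis_def by auto
  have iv: "{vb, vc, vd} \<subseteq> intvecs 4" using sub unfolding kerA_def by auto
  have zi: "z \<in> intvecs 4" and zs: "(\<Sum>i=1..4. a i * z i) = 0" using z unfolding kerA_def by auto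
  define P where "P = (\<Sum>i=1..(4::nat). Poly_Mapping.single i (nat (vplus z i)))"
  define N where "N = (\<Sum>i=1..(4::nat). Poly_Mapping.single i (nat (vminus z i)))"
  define X where "X = (Poly_Mapping.single P 1 - Poly_Mapping.single N 1 :: (nat \<Rightarrow>\<^sub>0 nat) \<Rightarrow>\<^sub>0 'k)"
  have sumeq: "(\<Sum>i=1..4. a i * int (nat (vplus z i))) = (\<Sum>i=1..4. a i * int (nat (vminus z i)))"
  proof -
    have "(\<Sum>i=1..4. a i * int (nat (vplus z i))) - (\<Sum>i=1..4. a i * int (nat (vminus z i)))
        = (\<Sum>i=1..4. a i * z i)"
      unfolding sum_subtractf[symmetric]
      by (rule sum.cong) (auto simp: vplus_def vminus_def algebra_simps max_def)
    then show ?thesis using zs by simp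
  qed
  have "X \<in> {monom 4 u - monom 4 v | u v. (\<Sum>i=1..4. a i * int (u i)) = (\<Sum>i=1..4. a i * int (v i))}"
    unfolding X_def P_def N_def monom_def
    by (rule CollectI, rule exI[of _ "\<lambda>i. nat (vplus z i)"], rule exI[of _ "\<lambda>i. nat (vminus z i)"])
      (use sumeq in simp)
  then have "X \<in> toric_ideal TYPE('k) a 4"
    unfolding toric_ideal_def ideal_gen_def
    by (intro CollectI exI[of _ "{X}"] exI[of _ "\<lambda>_. 1"]) auto
  then have "X \<in> ideal_gen ((binom 4 :: _ \<Rightarrow> ((nat \<Rightarrow>\<^sub>0 nat) \<Rightarrow>\<^sub>0 'k)) ` {vb, vc, vd})"
    using ideq by simp
  from psi_ideal[OF iv this] have ps: "psi vb vc vd P X = 0" .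
  have dz: "(\<lambda>t. int (Poly_Mapping.lookup P t) - int (Poly_Mapping.lookup N t)) = z"
    unfolding P_def N_def by (rule diff_E[OF zi])
  show ?thesis
  proof (cases "P = N")
    case True
    then have "z = (\<lambda>t. 0)" using dz by auto
    then show ?thesis using inL_zero by simp
  next
    case False
    have relPP: "rel vb vc vd P P" unfolding rel_def by (simp add: inL_zero)
    have "psi vb vc vd P X = 1 - (if rel vb vc vd N P then 1 else 0)"
      unfolding X_def psi_diff psi_single using relPP by simp
    with ps have "rel vb vc vd N P" by (auto split: if_splits)
    then have "inL vb vc vd (\<lambda>t. - (int (Poly_Mapping.lookup P t) - int (Poly_Mapping.lookup N t)))"
      unfolding rel_def by simp
    from inL_neg[OF this] show ?thesis using dz by simp
  qed
qed



lemma sum4: "(\<Sum>i=(1::nat)..4. f i) = f 1 + f 2 + f 3 + (f 4 :: 'a::comm_monoid_add)"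
proof -
  have "{1..4::nat} = {1,2,3,4}" by auto
  then show ?thesis by (simp add: add.assoc)
qed

lemma ball4: "(\<forall>i\<in>{1..4::nat}. P i) \<longleftrightarrow> P 1 \<and> P 2 \<and> P 3 \<and> P 4"
proof -
  have "{1..4::nat} = {1,2,3,4}" by auto
  then show ?thesis by simp
qed

definition FEa :: "int \<Rightarrow> int \<Rightarrow> int \<Rightarrow> int \<Rightarrow> int \<Rightarrow> int \<Rightarrow> int \<Rightarrow> int \<Rightarrow> bool" where
  "FEa u1 u2 u3 u4 z1 z2 z3 z4 \<longleftrightarrow> u1 \<le> max (-z1) 0 \<and> u2 \<le> max (-z2) 0 \<and> u3 \<le> max (-z3) 0 \<and> u4 \<le> max (-z4) 0"
definition FEb :: "int \<Rightarrow> int \<Rightarrow> int \<Rightarrow> int \<Rightarrow> int \<Rightarrow> int \<Rightarrow> int \<Rightarrow> int \<Rightarrow> bool" where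
  "FEb u1 u2 u3 u4 z1 z2 z3 z4 \<longleftrightarrow> -u1 \<le> max z1 0 \<and> -u2 \<le> max z2 0 \<and> -u3 \<le> max z3 0 \<and> -u4 \<le> max z4 0"
definition NR :: "int \<Rightarrow> int \<Rightarrow> int \<Rightarrow> int \<Rightarrow> int \<Rightarrow> int \<Rightarrow> int \<Rightarrow> int \<Rightarrow> bool" where
  "NR u1 u2 u3 u4 z1 z2 z3 z4 \<longleftrightarrow> \<bar>z1+u1\<bar> + \<bar>z2+u2\<bar> + \<bar>z3+u3\<bar> + \<bar>z4+u4\<bar> < \<bar>z1\<bar> + \<bar>z2\<bar> + \<bar>z3\<bar> + \<bar>z4\<bar>"
definition MV :: "int \<Rightarrow> int \<Rightarrow> int \<Rightarrow> int \<Rightarrow> int \<Rightarrow> int \<Rightarrow> int \<Rightarrow> int \<Rightarrow> bool" where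
  "MV u1 u2 u3 u4 z1 z2 z3 z4 \<longleftrightarrow> (FEa u1 u2 u3 u4 z1 z2 z3 z4 \<or> FEb u1 u2 u3 u4 z1 z2 z3 z4) \<and> NR u1 u2 u3 u4 z1 z2 z3 z4"

lemma vec4_simps [simp]: "vec4 x1 x2 x3 x4 1 = x1" "vec4 x1 x2 x3 x4 2 = x2"
  "vec4 x1 x2 x3 x4 3 = x3" "vec4 x1 x2 x3 x4 4 = x4" "vec4 x1 x2 x3 x4 (Suc 0) = x1"
  by (simp_all add: vec4_def)

lemma pm1: "max (x::int) 0 + e - max (-x) 0 = x + e" by (simp add: max_def)
lemma pm2: "max (-x::int) 0 + e - max x 0 = -x + e" by (simp add: max_def)
lemma pm3: "(0::int) \<le> max x 0 + e \<longleftrightarrow> -e \<le> max x 0" by auto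
lemma pm4: "(0::int) \<le> max (-x) 0 + e \<longleftrightarrow> - e \<le> max (-x) 0" by auto
lemma pm5: "\<bar>x + - e\<bar> = \<bar>-x + (e::int)\<bar>" by arith

lemma rd_step1: "reduces_distance n u z \<longleftrightarrow>
   (\<exists>e\<in>{1,-1::int}. (\<forall>i\<in>{1..n}. vplus z i + e * u i \<ge> 0) \<and> norm1 n (\<lambda>i. vplus z i + e * u i - vminus z i) < norm1 n z) \<or>
   (\<exists>e\<in>{1,-1::int}. (\<forall>i\<in>{1..n}. vminus z i + e * u i \<ge> 0) \<and> norm1 n (\<lambda>i. vminus z i + e * u i - vplus z i) < norm1 n z)"
  unfolding reduces_distance_def by blast

lemma rd_plus: "((\<forall>i\<in>{1..4}. vplus (vec4 z1 z2 z3 z4) i + vec4 w1 w2 w3 w4 i \<ge> 0) \<and>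
     norm1 4 (\<lambda>i. vplus (vec4 z1 z2 z3 z4) i + vec4 w1 w2 w3 w4 i - vminus (vec4 z1 z2 z3 z4) i) < norm1 4 (vec4 z1 z2 z3 z4))
  \<longleftrightarrow> FEb w1 w2 w3 w4 z1 z2 z3 z4 \<and> NR w1 w2 w3 w4 z1 z2 z3 z4"
  unfolding ball4 norm1_def sum4 vplus_def vminus_def FEb_def NR_def
  by (simp only: vec4_simps pm1 pm3)

lemma rd_minus: "((\<forall>i\<in>{1..4}. vminus (vec4 z1 z2 z3 z4) i + vec4 w1 w2 w3 w4 i \<ge> 0) \<and>
     norm1 4 (\<lambda>i. vminus (vec4 z1 z2 z3 z4) i + vec4 w1 w2 w3 w4 i - vplus (vec4 z1 z2 z3 z4) i) < norm1 4 (vec4 z1 z2 z3 z4))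
  \<longleftrightarrow> FEa (-w1) (-w2) (-w3) (-w4) z1 z2 z3 z4 \<and> NR (-w1) (-w2) (-w3) (-w4) z1 z2 z3 z4"
  unfolding ball4 norm1_def sum4 vplus_def vminus_def FEa_def NR_def
  by (simp only: vec4_simps pm2 pm4 minus_minus pm5[symmetric])

lemma e_vec4: "e * vec4 u1 u2 u3 u4 i = vec4 (e*u1) (e*u2) (e*u3) (e*u4) i"
  by (auto simp: vec4_def)

lemma rd_iff: "reduces_distance 4 (vec4 u1 u2 u3 u4) (vec4 z1 z2 z3 z4) \<longleftrightarrow>
  MV u1 u2 u3 u4 z1 z2 z3 z4 \<or> MV (-u1) (-u2) (-u3) (-u4) z1 z2 z3 z4"
proof -
  have A: "(\<forall>i\<in>{1..4}. vplus (vec4 z1 z2 z3 z4) i + e * vec4 u1 u2 u3 u4 i \<ge> 0) \<and>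
     norm1 4 (\<lambda>i. vplus (vec4 z1 z2 z3 z4) i + e * vec4 u1 u2 u3 u4 i - vminus (vec4 z1 z2 z3 z4) i) < norm1 4 (vec4 z1 z2 z3 z4)
   \<longleftrightarrow> FEb (e*u1) (e*u2) (e*u3) (e*u4) z1 z2 z3 z4 \<and> NR (e*u1) (e*u2) (e*u3) (e*u4) z1 z2 z3 z4" for e
    unfolding e_vec4 by (rule rd_plus)
  have B: "(\<forall>i\<in>{1..4}. vminus (vec4 z1 z2 z3 z4) i + e * vec4 u1 u2 u3 u4 i \<ge> 0) \<and>
     norm1 4 (\<lambda>i. vminus (vec4 z1 z2 z3 z4) i + e * vec4 u1 u2 u3 u4 i - vplus (vec4 z1 z2 z3 z4) i) < norm1 4 (vec4 z1 z2 z3 z4)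
   \<longleftrightarrow> FEa (-(e*u1)) (-(e*u2)) (-(e*u3)) (-(e*u4)) z1 z2 z3 z4 \<and> NR (-(e*u1)) (-(e*u2)) (-(e*u3)) (-(e*u4)) z1 z2 z3 z4" for e
    unfolding e_vec4 by (rule rd_minus)
  show ?thesis
    unfolding rd_step1 A B MV_def by auto
qed



lemma IC1: assumes "z1 \<ge> b1" "b1 > b2" "b2 > 0"
  shows "MV (-b1) b2 0 0 z1 z2 z3 z4"
proof -
  have "\<bar>z1 + - b1\<bar> = \<bar>z1\<bar> - b1" "\<bar>z2 + b2\<bar> \<le> \<bar>z2\<bar> + b2" using assms by arith+
  moreover have "FEb (-b1) b2 0 0 z1 z2 z3 z4" using assms unfolding FEb_def by (simp add: le_max_iff_disj)
  ultimately show ?thesis using assms unfolding MV_def NR_def by simp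
qed

lemma IC2a: assumes "z2 \<ge> d2" "z4 \<le> -d4" "d1 + d3 < d2 + d4" "d1 \<ge> 0" "d2 \<ge> 0" "d3 \<ge> 0" "d4 > 0"
  shows "MV (-d1) (-d2) (-d3) d4 z1 z2 z3 z4"
proof -
  have "\<bar>z1 + - d1\<bar> \<le> \<bar>z1\<bar> + d1" "\<bar>z2 + - d2\<bar> = \<bar>z2\<bar> - d2" "\<bar>z3 + - d3\<bar> \<le> \<bar>z3\<bar> + d3"
    "\<bar>z4 + d4\<bar> = \<bar>z4\<bar> - d4" using assms by arith+
  moreover have "FEa (-d1) (-d2) (-d3) d4 z1 z2 z3 z4" using assms unfolding FEa_def by (simp add: le_max_iff_disj)
  ultimately show ?thesis using assms unfolding MV_def NR_def by simp
qed

lemma IC2b: assumes "c1 = 0" "z2 \<ge> c2" "c3 < c2" "c3 > 0"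
  shows "MV (-c1) (-c2) c3 0 z1 z2 z3 z4"
proof -
  have "\<bar>z1 + - c1\<bar> = \<bar>z1\<bar>" "\<bar>z2 + - c2\<bar> = \<bar>z2\<bar> - c2" "\<bar>z3 + c3\<bar> \<le> \<bar>z3\<bar> + c3"
    using assms by arith+
  moreover have "FEb (-c1) (-c2) c3 0 z1 z2 z3 z4" using assms unfolding FEb_def by (simp add: le_max_iff_disj)
  ultimately show ?thesis using assms unfolding MV_def NR_def by simp
qed

lemma IC3: assumes "z2 \<ge> d2" "z3 \<ge> d3" "z4 \<le> -d4" "d1 < d2 + d3 + d4" "d1 \<ge> 0" "d2 \<ge> 0" "d3 \<ge> 0" "d4 > 0"
  shows "MV (-d1) (-d2) (-d3) d4 z1 z2 z3 z4"
proof -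
  have "\<bar>z1 + - d1\<bar> \<le> \<bar>z1\<bar> + d1" "\<bar>z2 + - d2\<bar> = \<bar>z2\<bar> - d2" "\<bar>z3 + - d3\<bar> = \<bar>z3\<bar> - d3"
    "\<bar>z4 + d4\<bar> = \<bar>z4\<bar> - d4" using assms by arith+
  moreover have "FEa (-d1) (-d2) (-d3) d4 z1 z2 z3 z4" using assms unfolding FEa_def by (simp add: le_max_iff_disj)
  ultimately show ?thesis using assms unfolding MV_def NR_def by simp
qed

lemma IC4a: assumes "z3 \<ge> d3" "z4 \<le> -d4" "d1 + d2 < d3 + d4" "d1 \<ge> 0" "d2 \<ge> 0" "d3 \<ge> 0" "d4 > 0"
  shows "MV (-d1) (-d2) (-d3) d4 z1 z2 z3 z4"
proof -
  have "\<bar>z1 + - d1\<bar> \<le> \<bar>z1\<bar> + d1" "\<bar>z2 + - d2\<bar> \<le> \<bar>z2\<bar> + d2" "\<bar>z3 + - d3\<bar> = \<bar>z3\<bar> - d3"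
    "\<bar>z4 + d4\<bar> = \<bar>z4\<bar> - d4" using assms by arith+
  moreover have "FEa (-d1) (-d2) (-d3) d4 z1 z2 z3 z4" using assms unfolding FEa_def by (simp add: le_max_iff_disj)
  ultimately show ?thesis using assms unfolding MV_def NR_def by simp
qed

lemma IC4b: assumes "z3 \<ge> c3" "c1 + c2 < c3" "c1 \<ge> 0" "c2 \<ge> 0"
  shows "MV c1 c2 (-c3) 0 z1 z2 z3 z4"
proof -
  have "\<bar>z1 + c1\<bar> \<le> \<bar>z1\<bar> + c1" "\<bar>z2 + c2\<bar> \<le> \<bar>z2\<bar> + c2" "\<bar>z3 + - c3\<bar> = \<bar>z3\<bar> - c3"
    using assms by arith+
  moreover have "FEb c1 c2 (-c3) 0 z1 z2 z3 z4" using assms unfolding FEb_def by (simp add: le_max_iff_disj)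
  ultimately show ?thesis using assms unfolding MV_def NR_def by simp
qed

lemma IC5: assumes "z2 \<ge> c2" "z3 \<le> -c3" "c1 < c2 + c3" "c1 \<ge> 0" "c2 \<ge> 0" "c3 > 0"
  shows "MV (-c1) (-c2) c3 0 z1 z2 z3 z4"
proof -
  have "\<bar>z1 + - c1\<bar> \<le> \<bar>z1\<bar> + c1" "\<bar>z2 + - c2\<bar> = \<bar>z2\<bar> - c2" "\<bar>z3 + c3\<bar> = \<bar>z3\<bar> - c3"
    using assms by arith+
  moreover have "FEa (-c1) (-c2) c3 0 z1 z2 z3 z4" using assms unfolding FEa_def by (simp add: le_max_iff_disj)
  ultimately show ?thesis using assms unfolding MV_def NR_def by simp
qed

lemma NB: assumes "z1 = 0" "b1 > b2" "b2 > 0"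
  shows "\<not> MV b1 (-b2) 0 0 z1 z2 z3 z4" "\<not> MV (-b1) b2 0 0 z1 z2 z3 z4"
proof -
  have "\<bar>z2 + - b2\<bar> \<ge> \<bar>z2\<bar> - b2" "\<bar>z2 + b2\<bar> \<ge> \<bar>z2\<bar> - b2" using assms by arith+
  then show "\<not> MV b1 (-b2) 0 0 z1 z2 z3 z4" "\<not> MV (-b1) b2 0 0 z1 z2 z3 z4"
    using assms unfolding MV_def NR_def by simp_all
qed

lemma NC: assumes "z1 = 0" "c1 \<ge> c2 + c3" "c2 \<ge> 0" "c3 > 0"
  shows "\<not> MV c1 c2 (-c3) 0 z1 z2 z3 z4" "\<not> MV (-c1) (-c2) c3 0 z1 z2 z3 z4"
proof -
  have "\<bar>z2 + - c2\<bar> \<ge> \<bar>z2\<bar> - c2" "\<bar>z2 + c2\<bar> \<ge> \<bar>z2\<bar> - c2"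
       "\<bar>z3 + - c3\<bar> \<ge> \<bar>z3\<bar> - c3" "\<bar>z3 + c3\<bar> \<ge> \<bar>z3\<bar> - c3" "\<bar>c1\<bar> = c1" using assms by arith+
  then show "\<not> MV c1 c2 (-c3) 0 z1 z2 z3 z4" "\<not> MV (-c1) (-c2) c3 0 z1 z2 z3 z4"
    using assms unfolding MV_def NR_def by simp_all
qed

lemma ND1: assumes "z1 = 0" "z2 \<ge> 0" "z3 \<le> 0" "z4 = 0" "\<not> (d1 = 0 \<and> d2 = 0 \<and> d3 > d4)"
   "\<not> (d1 = 0 \<and> d3 = 0 \<and> d2 > d4)" "d1 \<ge> 0" "d2 \<ge> 0" "d3 \<ge> 0" "d4 > 0"
  shows "\<not> MV d1 d2 d3 (-d4) z1 z2 z3 z4" "\<not> MV (-d1) (-d2) (-d3) d4 z1 z2 z3 z4"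
proof -
  have f: "\<bar>z2 + - d2\<bar> \<ge> \<bar>z2\<bar> - d2" "\<bar>z3 + d3\<bar> \<ge> \<bar>z3\<bar> - d3" using assms by arith+
  show "\<not> MV d1 d2 d3 (-d4) z1 z2 z3 z4"
    using assms f unfolding MV_def FEa_def FEb_def NR_def by (auto simp: le_max_iff_disj)
  show "\<not> MV (-d1) (-d2) (-d3) d4 z1 z2 z3 z4"
    using assms f unfolding MV_def FEa_def FEb_def NR_def by (auto simp: le_max_iff_disj)
qed

lemma ND2: assumes "z1 = 0" "z2 \<ge> 0" "z3 = 0" "z4 \<le> -d4" "d1 = 0" "d2 = 0" "d3 > d4" "d4 > 0"
  shows "\<not> MV d1 d2 d3 (-d4) z1 z2 z3 z4" "\<not> MV (-d1) (-d2) (-d3) d4 z1 z2 z3 z4"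
proof -
  have f: "\<bar>z4 + d4\<bar> \<ge> \<bar>z4\<bar> - d4" using assms by arith+
  show "\<not> MV d1 d2 d3 (-d4) z1 z2 z3 z4"
    using assms f unfolding MV_def FEa_def FEb_def NR_def by (auto simp: le_max_iff_disj)
  show "\<not> MV (-d1) (-d2) (-d3) d4 z1 z2 z3 z4"
    using assms f unfolding MV_def FEa_def FEb_def NR_def by (auto simp: le_max_iff_disj)
qed

lemma ND3: assumes "z1 = 0" "z2 \<ge> 0" "z2 < d2" "z4 \<ge> 0" "d1 = 0" "d3 = 0" "d2 > d4" "d4 > 0"
  shows "\<not> MV d1 d2 d3 (-d4) z1 z2 z3 z4" "\<not> MV (-d1) (-d2) (-d3) d4 z1 z2 z3 z4"
proof -
  have f: "\<bar>z4 + - d4\<bar> \<ge> \<bar>z4\<bar> - d4" "\<bar>z2 + d2\<bar> = \<bar>z2\<bar> + d2" using assms by arith+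
  show "\<not> MV d1 d2 d3 (-d4) z1 z2 z3 z4"
    using assms f unfolding MV_def FEa_def FEb_def NR_def by (auto simp: le_max_iff_disj)
  show "\<not> MV (-d1) (-d2) (-d3) d4 z1 z2 z3 z4"
    using assms f unfolding MV_def FEa_def FEb_def NR_def by (auto simp: le_max_iff_disj)
qed

lemma NWb: assumes "z1 = 0" "z3 = 0" "z2 \<ge> c2" "z2 \<ge> d2" "z4 \<le> -d4"
   "\<not> (c1 = 0 \<and> c3 < c2)" "d1 + d3 \<ge> d2 + d4" "c1 + c2 > 0" "d1 + d2 + d3 > 0"
   "c1 \<ge> 0" "c2 \<ge> 0" "c3 > 0" "d1 \<ge> 0" "d2 \<ge> 0" "d3 \<ge> 0" "d4 > 0"
  shows "\<not> MV c1 c2 (-c3) 0 z1 z2 z3 z4" "\<not> MV (-c1) (-c2) c3 0 z1 z2 z3 z4"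
    "\<not> MV d1 d2 d3 (-d4) z1 z2 z3 z4" "\<not> MV (-d1) (-d2) (-d3) d4 z1 z2 z3 z4"
proof -
  have f: "\<bar>z4 + d4\<bar> \<ge> \<bar>z4\<bar> - d4" "\<bar>z2 + - d2\<bar> \<ge> \<bar>z2\<bar> - d2" "\<bar>z2 + - c2\<bar> \<ge> \<bar>z2\<bar> - c2"
    using assms by arith+
  show "\<not> MV c1 c2 (-c3) 0 z1 z2 z3 z4"
    using assms f unfolding MV_def FEa_def FEb_def NR_def by (auto simp: le_max_iff_disj)
  show "\<not> MV (-c1) (-c2) c3 0 z1 z2 z3 z4"
    using assms f unfolding MV_def FEa_def FEb_def NR_def by (auto simp: le_max_iff_disj)
  show "\<not> MV d1 d2 d3 (-d4) z1 z2 z3 z4"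
    using assms f unfolding MV_def FEa_def FEb_def NR_def by (auto simp: le_max_iff_disj)
  show "\<not> MV (-d1) (-d2) (-d3) d4 z1 z2 z3 z4"
    using assms f unfolding MV_def FEa_def FEb_def NR_def by (auto simp: le_max_iff_disj)
qed

lemma NWc: assumes "z1 = 0" "z2 = 0" "z3 \<ge> c3" "z3 \<ge> d3" "z4 \<le> -d4"
   "c1 + c2 \<ge> c3" "d1 + d2 \<ge> d3 + d4" "c1 + c2 > 0" "d1 + d2 + d3 > 0"
   "c1 \<ge> 0" "c2 \<ge> 0" "c3 > 0" "d1 \<ge> 0" "d2 \<ge> 0" "d3 \<ge> 0" "d4 > 0"
  shows "\<not> MV c1 c2 (-c3) 0 z1 z2 z3 z4" "\<not> MV (-c1) (-c2) c3 0 z1 z2 z3 z4"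
    "\<not> MV d1 d2 d3 (-d4) z1 z2 z3 z4" "\<not> MV (-d1) (-d2) (-d3) d4 z1 z2 z3 z4"
proof -
  have f: "\<bar>z4 + d4\<bar> \<ge> \<bar>z4\<bar> - d4" "\<bar>z3 + - d3\<bar> \<ge> \<bar>z3\<bar> - d3" "\<bar>z3 + - c3\<bar> \<ge> \<bar>z3\<bar> - c3"
    using assms by arith+
  show "\<not> MV c1 c2 (-c3) 0 z1 z2 z3 z4"
    using assms f unfolding MV_def FEa_def FEb_def NR_def by (auto simp: le_max_iff_disj)
  show "\<not> MV (-c1) (-c2) c3 0 z1 z2 z3 z4"
    using assms f unfolding MV_def FEa_def FEb_def NR_def by (auto simp: le_max_iff_disj)
  show "\<not> MV d1 d2 d3 (-d4) z1 z2 z3 z4"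
    using assms f unfolding MV_def FEa_def FEb_def NR_def by (auto simp: le_max_iff_disj)
  show "\<not> MV (-d1) (-d2) (-d3) d4 z1 z2 z3 z4"
    using assms f unfolding MV_def FEa_def FEb_def NR_def by (auto simp: le_max_iff_disj)
qed



lemma rd_neg: "reduces_distance n u (\<lambda>t. - z t) = reduces_distance n u z"
proof -
  have 1: "vplus (\<lambda>t. - z t) = vminus z" "vminus (\<lambda>t. - z t) = vplus z"
    by (auto simp: vplus_def vminus_def)
  have 2: "norm1 n (\<lambda>t. - z t) = norm1 n z" by (simp add: norm1_def)
  show ?thesis unfolding reduces_distance_def 1 2 by blast
qed

lemma notred_all:
  assumes "\<not> MV b1 (-b2) 0 0 z1 z2 z3 z4" "\<not> MV (-b1) b2 0 0 z1 z2 z3 z4"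
    "\<not> MV c1 c2 (-c3) 0 z1 z2 z3 z4" "\<not> MV (-c1) (-c2) c3 0 z1 z2 z3 z4"
    "\<not> MV d1 d2 d3 (-d4) z1 z2 z3 z4" "\<not> MV (-d1) (-d2) (-d3) d4 z1 z2 z3 z4"
  shows "\<forall>u\<in>{vec4 b1 (- b2) 0 0, vec4 c1 c2 (- c3) 0, vec4 d1 d2 d3 (- d4)}.
           \<not> reduces_distance 4 u (vec4 z1 z2 z3 z4)"
  using assms by (simp add: rd_iff)

lemma red_b: "MV (-b1) b2 0 0 z1 z2 z3 z4 \<Longrightarrow> reduces_distance 4 (vec4 b1 (- b2) 0 0) (vec4 z1 z2 z3 z4)"
  by (simp add: rd_iff)
lemma red_cm: "MV (-c1) (-c2) c3 0 z1 z2 z3 z4 \<Longrightarrow> reduces_distance 4 (vec4 c1 c2 (- c3) 0) (vec4 z1 z2 z3 z4)"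
  by (simp add: rd_iff)
lemma red_cp: "MV c1 c2 (-c3) 0 z1 z2 z3 z4 \<Longrightarrow> reduces_distance 4 (vec4 c1 c2 (- c3) 0) (vec4 z1 z2 z3 z4)"
  by (simp add: rd_iff)
lemma red_dm: "MV (-d1) (-d2) (-d3) d4 z1 z2 z3 z4 \<Longrightarrow> reduces_distance 4 (vec4 d1 d2 d3 (- d4)) (vec4 z1 z2 z3 z4)"
  by (simp add: rd_iff)

lemma vec4_nz3: "z3 \<noteq> 0 \<Longrightarrow> vec4 z1 z2 z3 z4 \<noteq> (\<lambda>_. 0)"
  by (metis vec4_simps(3))
lemma vec4_nz4: "z4 \<noteq> 0 \<Longrightarrow> vec4 z1 z2 z3 z4 \<noteq> (\<lambda>_. 0)"
  by (metis vec4_simps(4))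

lemma m1: "(x::int) \<ge> 1 \<Longrightarrow> y \<ge> 0 \<Longrightarrow> x * y \<ge> y"
  using mult_right_mono[of 1 x y] by simp
lemma m0: "(x::int) \<ge> 0 \<Longrightarrow> y \<ge> 0 \<Longrightarrow> x * y \<ge> 0" by simp
lemma mn: "(x::int) \<le> 0 \<Longrightarrow> y \<ge> 0 \<Longrightarrow> x * y \<le> 0" by (simp add: mult_nonpos_nonneg)



theorem corollary6p2:
  fixes a :: "nat \<Rightarrow> int"
    and b1 b2 c1 c2 c3 d1 d2 d3 d4 :: int
    and M :: "(nat \<Rightarrow> int) set"
  assumes apos: "\<forall>i\<in>{1..4}. a i > 0"
    and glue: "gluing_first_kind a 4"
    and Mdef: "M = {vec4 b1 (- b2) 0 0, vec4 c1 c2 (- c3) 0, vec4 d1 d2 d3 (- d4)}"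
    and pos: "b1 > 0" "b2 > 0" "c3 > 0" "d4 > 0"
    and nonneg: "c1 \<ge> 0" "c2 \<ge> 0" "d1 \<ge> 0" "d2 \<ge> 0" "d3 \<ge> 0"
    and minM: "minimal_markov_basis TYPE('k::field) a 4 M"
    and b12: "b1 > b2"
  shows "distance_reducing a 4 M \<longleftrightarrow>
           c1 < c2 + c3 \<and>
           ((c1 = 0 \<and> c3 < c2) \<or> d1 + d3 < d2 + d4) \<and>
           (c1 + c2 < c3 \<or> d1 + d2 < d3 + d4)"
proof -
  define vb where "vb = vec4 b1 (- b2) 0 0"
  define vc where "vc = vec4 c1 c2 (- c3) 0"
  define vd where "vd = vec4 d1 d2 d3 (- d4)"
  have mk: "markov_basis TYPE('k) a 4 {vb, vc, vd}"
    using minM Mdef unfolding minimal_markov_basis_def vb_def vc_def vd_def by simp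
  have sub: "{vb, vc, vd} \<subseteq> kerA a 4" using mk unfolding markov_basis_def by simp
  have a1: "a 1 > 0" and a2: "a 2 > 0" and a3: "a 3 > 0" and a4: "a 4 > 0"
    using apos by auto
  have eb: "a 1 * b1 - a 2 * b2 = 0"
  proof -
    have "(\<Sum>i=1..4. a i * vb i) = 0" using sub unfolding kerA_def by blast
    then show ?thesis unfolding sum4 vb_def by simp
  qed
  have ec: "a 1 * c1 + a 2 * c2 - a 3 * c3 = 0"
  proof -
    have "(\<Sum>i=1..4. a i * vc i) = 0" using sub unfolding kerA_def by blast
    then show ?thesis unfolding sum4 vc_def by simp
  qed
  have ed: "a 1 * d1 + a 2 * d2 + a 3 * d3 - a 4 * d4 = 0"
  proof -
    have "(\<Sum>i=1..4. a i * vd i) = 0" using sub unfolding kerA_def by blast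
    then show ?thesis unfolding sum4 vd_def by simp
  qed
  have cpos: "c1 + c2 > 0"
  proof (rule ccontr)
    assume "\<not> c1 + c2 > 0"
    then have "c1 = 0" "c2 = 0" using nonneg by auto
    then have "a 3 * c3 = 0" using ec by simp
    moreover have "a 3 * c3 > 0" using a3 pos by simp
    ultimately show False by linarith
  qed
  have dpos: "d1 + d2 + d3 > 0"
  proof (rule ccontr)
    assume "\<not> d1 + d2 + d3 > 0"
    then have "d1 = 0" "d2 = 0" "d3 = 0" using nonneg by auto
    then have "a 4 * d4 = 0" using ed by simp
    moreover have "a 4 * d4 > 0" using a4 pos by simp
    ultimately show False by linarith
  qed
  define comb where "comb i j k = vec4 (i*b1 + j*c1 + k*d1) ((- i)*b2 + j*c2 + k*d2) ((- j)*c3 + k*d3) ((- k)*d4)"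
    for i j k :: int
  have comb_ker: "comb i j k \<in> kerA a 4" for i j k
  proof -
    have "(\<Sum>t=1..4. a t * comb i j k t) = i * (a 1 * b1 - a 2 * b2) + j * (a 1 * c1 + a 2 * c2 - a 3 * c3)
        + k * (a 1 * d1 + a 2 * d2 + a 3 * d3 - a 4 * d4)"
      unfolding comb_def sum4 by (simp add: algebra_simps)
    also have "\<dots> = 0" using eb ec ed by simp
    finally show ?thesis unfolding kerA_def intvecs_def comb_def by (auto simp: vec4_def)
  qed
  have lat: "\<exists>i j k. z = comb i j k" if "z \<in> kerA a 4" for z
  proof -
    from markov_lattice[OF mk that] obtain i j k where ijk: "\<forall>t. z t = i * vb t + j * vc t + k * vd t"
      unfolding inL_def by blast
    have "z = comb i j k"
    proof
      fix t
      show "z t = comb i j k t" using ijk unfolding comb_def vb_def vc_def vd_def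
        by (auto simp: vec4_def algebra_simps)
    qed
    then show ?thesis by blast
  qed
  have comb_neg: "comb (- i) (- j) (- k) = (\<lambda>t. - comb i j k t)" for i j k
    unfolding comb_def by (auto simp: vec4_def algebra_simps)
  have Mv: "M = {vb, vc, vd}" unfolding Mdef vb_def vc_def vd_def by simp
  have posdir: "\<exists>u\<in>M. reduces_distance 4 u (comb i j k)"
    if ca: "c1 < c2 + c3" and cb: "(c1 = 0 \<and> c3 < c2) \<or> d1 + d3 < d2 + d4"
      and cc: "c1 + c2 < c3 \<or> d1 + d2 < d3 + d4"
      and nz: "k > 0 \<or> (k = 0 \<and> j > 0) \<or> (k = 0 \<and> j = 0 \<and> i > 0)" for i j k
  proof -
    consider (C1) "i \<ge> 1" "j \<ge> 0" "k \<ge> 0" | (C2) "k \<ge> 1" "j \<ge> 1" "i \<le> 0"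
      | (C3) "k \<ge> 1" "j = 0" "i \<le> 0" | (C4) "k \<ge> 1" "j \<le> -1" | (C5) "k = 0" "j \<ge> 1" "i \<le> 0"
      using nz by linarith
    then show ?thesis
    proof cases
      case C1
      have "i * b1 \<ge> b1" "j * c1 \<ge> 0" "k * d1 \<ge> 0" using C1 pos nonneg m1 m0 mn by auto
      then have "reduces_distance 4 vb (comb i j k)" unfolding comb_def vb_def
        by (intro red_b IC1) (use pos b12 in linarith)+
      then show ?thesis using Mv by blast
    next
      case C2
      have f: "(- i) * b2 \<ge> 0" "j * c2 \<ge> c2" "k * d2 \<ge> d2" "j * c2 \<ge> 0" "k * d2 \<ge> 0" "k * d4 \<ge> d4"
        using C2 pos nonneg m1 m0 mn by auto
      show ?thesis
      proof (cases "d1 + d3 < d2 + d4")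
        case True
        have "reduces_distance 4 vd (comb i j k)" unfolding comb_def vd_def
          by (intro red_dm IC2a) (use f True pos nonneg in linarith)+
        then show ?thesis using Mv by blast
      next
        case False
        then have "c1 = 0" "c3 < c2" using cb by auto
        then have "reduces_distance 4 vc (comb i j k)" unfolding comb_def vc_def
          by (intro red_cm IC2b) (use f pos nonneg in linarith)+
        then show ?thesis using Mv by blast
      qed
    next
      case C3
      have f: "(- i) * b2 \<ge> 0" "k * d2 \<ge> d2" "k * d3 \<ge> d3" "k * d4 \<ge> d4" "j * c2 = 0" "(- j) * c3 = 0"
        using C3 pos nonneg m1 m0 mn by auto
      have dd: "d1 < d2 + d3 + d4" using cb cc nonneg by linarith
      have "reduces_distance 4 vd (comb i j k)" unfolding comb_def vd_def
        by (intro red_dm IC3) (use f C3 dd pos nonneg in linarith)+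
      then show ?thesis using Mv by blast
    next
      case C4
      have f0: "(- j) * c3 \<ge> c3" using m1[of "- j" c3] C4 pos by linarith
      have f: "(- j) * c3 \<ge> c3" "k * d3 \<ge> d3" "k * d4 \<ge> d4" "k * d3 \<ge> 0"
        using f0 C4 pos nonneg m1 m0 mn by auto
      show ?thesis
      proof (cases "d1 + d2 < d3 + d4")
        case True
        have "reduces_distance 4 vd (comb i j k)" unfolding comb_def vd_def
          by (intro red_dm IC4a) (use f True pos nonneg in linarith)+
        then show ?thesis using Mv by blast
      next
        case False
        then have "c1 + c2 < c3" using cc by auto
        then have "reduces_distance 4 vc (comb i j k)" unfolding comb_def vc_def
          by (intro red_cp IC4b) (use f pos nonneg in linarith)+
        then show ?thesis using Mv by blast
      qed
    next
      case C5
      have f0: "j * c3 \<ge> c3" using C5 pos nonneg m1 by auto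
      have f: "(- i) * b2 \<ge> 0" "j * c2 \<ge> c2" "(- j) * c3 \<le> - c3" "k * d2 = 0" "k * d3 = 0"
        using f0 C5 pos nonneg m1 m0 mn by auto
      have "reduces_distance 4 vc (comb i j k)" unfolding comb_def vc_def
        by (intro red_cm IC5) (use f C5 ca pos nonneg in linarith)+
      then show ?thesis using Mv by blast
    qed
  qed
  define P where "P = c1 * b2 + b1 * c2"
  define Q where "Q = d1 * b2 + b1 * d2"
  have P1: "P \<ge> 1"
  proof (cases "c1 \<ge> 1")
    case True
    then have "c1 * b2 \<ge> b2" using m1 pos by auto
    moreover have "b1 * c2 \<ge> 0" using pos nonneg by simp
    ultimately show ?thesis unfolding P_def using pos by linarith
  next
    case False
    then have "c2 \<ge> 1" using cpos nonneg by linarith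
    then have "b1 * c2 \<ge> b1" using m1[of c2 b1] pos by (simp add: mult.commute)
    moreover have "c1 * b2 \<ge> 0" using pos nonneg by simp
    ultimately show ?thesis unfolding P_def using pos by linarith
  qed
  have Q0: "Q \<ge> 0" unfolding Q_def using pos nonneg by simp
  have Q1: "Q \<ge> 1" if "d1 + d2 \<ge> 1"
  proof (cases "d1 \<ge> 1")
    case True
    then have "d1 * b2 \<ge> b2" using m1 pos by auto
    moreover have "b1 * d2 \<ge> 0" using pos nonneg by simp
    ultimately show ?thesis unfolding Q_def using pos by linarith
  next
    case False
    then have "d2 \<ge> 1" using that nonneg by linarith
    then have "b1 * d2 \<ge> b1" using m1[of d2 b1] pos by (simp add: mult.commute)
    moreover have "d1 * b2 \<ge> 0" using pos nonneg by simp
    ultimately show ?thesis unfolding Q_def using pos by linarith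
  qed
  define Z where "Z = d3 * P + c3 * Q"
  have Z1: "Z \<ge> 1"
  proof (cases "d3 \<ge> 1")
    case True
    then have "d3 * P \<ge> P" using m1 P1 by auto
    moreover have "c3 * Q \<ge> 0" using Q0 pos by simp
    ultimately show ?thesis unfolding Z_def using P1 by linarith
  next
    case False
    then have "d3 = 0" "d1 + d2 \<ge> 1" using nonneg dpos by linarith+
    then have "Q \<ge> 1" using Q1 by simp
    then have cq: "c3 * Q \<ge> Q" using m1[of c3 Q] pos by simp
    have "Z = c3 * Q" unfolding Z_def using \<open>d3 = 0\<close> by simp
    then show ?thesis using cq \<open>Q \<ge> 1\<close> by linarith
  qed
  have b1c3: "b1 * c3 \<ge> 1" using m1[of b1 c3] pos by linarith
  show ?thesis
  proof
    assume DR: "distance_reducing a 4 M"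
    have noW: False if "w \<in> kerA a 4" "w \<noteq> (\<lambda>_. 0)" "\<forall>u\<in>M. \<not> reduces_distance 4 u w" for w
      using DR that unfolding distance_reducing_def by blast
    have A: "c1 < c2 + c3"
    proof (rule ccontr)
      assume "\<not> c1 < c2 + c3"
      then have ca: "c1 \<ge> c2 + c3" by simp
      consider (DA) "d1 = 0" "d2 = 0" "d3 > d4" | (DB) "d1 = 0" "d3 = 0" "d2 > d4"
        | (DC) "\<not> (d1 = 0 \<and> d2 = 0 \<and> d3 > d4)" "\<not> (d1 = 0 \<and> d3 = 0 \<and> d2 > d4)" by blast
      then show False
      proof cases
        case DA
        define i where "i = - (d3 * c1)"
        define j where "j = b1 * d3"
        define k where "k = b1 * c3"
        define z1 where "z1 = i*b1 + j*c1 + k*d1"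
        define z2 where "z2 = (- i)*b2 + j*c2 + k*d2"
        define z3 where "z3 = (- j)*c3 + k*d3"
        define z4 where "z4 = (- k)*d4"
        have w: "comb i j k = vec4 z1 z2 z3 z4" unfolding comb_def z1_def z2_def z3_def z4_def by simp
        have f1: "z1 = 0" unfolding z1_def i_def j_def k_def using DA by (simp add: algebra_simps)
        have f3: "z3 = 0" unfolding z3_def j_def k_def by (simp add: algebra_simps)
        have f2: "z2 \<ge> 0" unfolding z2_def i_def j_def k_def using DA pos nonneg by simp
        have "k * d4 \<ge> d4" unfolding k_def using m1 b1c3 pos by simp
        then have f4: "z4 \<le> - d4" unfolding z4_def by simp
        have nr: "\<forall>u\<in>M. \<not> reduces_distance 4 u (vec4 z1 z2 z3 z4)"
          unfolding Mdef
          by (rule notred_all[OF NB(1)[OF f1 b12 pos(2)] NB(2)[OF f1 b12 pos(2)]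
                 NC(1)[OF f1 ca nonneg(2) pos(3)] NC(2)[OF f1 ca nonneg(2) pos(3)]
                 ND2(1)[OF f1 f2 f3 f4 DA pos(4)] ND2(2)[OF f1 f2 f3 f4 DA pos(4)]])
        have "z4 \<noteq> 0" using f4 pos by linarith
        then show False using noW[OF _ vec4_nz4 nr] comb_ker[of i j k] w by simp
      next
        case DB
        define m where "m = (c1 * b2 + b1 * c2) div d2"
        define i where "i = - c1"
        define j where "j = b1"
        define k where "k = - m"
        define z1 where "z1 = i*b1 + j*c1 + k*d1"
        define z2 where "z2 = (- i)*b2 + j*c2 + k*d2"
        define z3 where "z3 = (- j)*c3 + k*d3"
        define z4 where "z4 = (- k)*d4"
        have w: "comb i j k = vec4 z1 z2 z3 z4" unfolding comb_def z1_def z2_def z3_def z4_def by simp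
        have f1: "z1 = 0" unfolding z1_def i_def j_def k_def using DB by (simp add: algebra_simps)
        have d2p: "d2 > 0" using DB pos by linarith
        have Z0: "c1 * b2 + b1 * c2 \<ge> 0" using pos nonneg by simp
        have "z2 = (c1 * b2 + b1 * c2) mod d2"
          unfolding z2_def i_def j_def k_def m_def
          using div_mult_mod_eq[of "c1 * b2 + b1 * c2" d2] by (simp add: algebra_simps)
        then have f2: "z2 \<ge> 0" "z2 < d2" using d2p by simp_all
        have "m \<ge> 0" unfolding m_def using Z0 d2p by (simp add: pos_imp_zdiv_nonneg_iff)
        then have f4: "z4 \<ge> 0" unfolding z4_def k_def using pos by simp
        have f3: "z3 \<noteq> 0" unfolding z3_def j_def k_def using DB pos by simp
        have nr: "\<forall>u\<in>M. \<not> reduces_distance 4 u (vec4 z1 z2 z3 z4)"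
          unfolding Mdef
          by (rule notred_all[OF NB(1)[OF f1 b12 pos(2)] NB(2)[OF f1 b12 pos(2)]
                 NC(1)[OF f1 ca nonneg(2) pos(3)] NC(2)[OF f1 ca nonneg(2) pos(3)]
                 ND3(1)[OF f1 f2 f4 DB pos(4)] ND3(2)[OF f1 f2 f4 DB pos(4)]])
        then show False using noW[OF _ vec4_nz3[OF f3] nr] comb_ker[of i j k] w by simp
      next
        case DC
        define i where "i = - c1"
        define j where "j = b1"
        define k where "k = (0::int)"
        define z1 where "z1 = i*b1 + j*c1 + k*d1"
        define z2 where "z2 = (- i)*b2 + j*c2 + k*d2"
        define z3 where "z3 = (- j)*c3 + k*d3"
        define z4 where "z4 = (- k)*d4"
        have w: "comb i j k = vec4 z1 z2 z3 z4" unfolding comb_def z1_def z2_def z3_def z4_def by simp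
        have f1: "z1 = 0" unfolding z1_def i_def j_def k_def by (simp add: algebra_simps)
        have f2: "z2 \<ge> 0" unfolding z2_def i_def j_def k_def using pos nonneg by simp
        have f3: "z3 \<le> 0" "z3 \<noteq> 0" unfolding z3_def j_def k_def using b1c3 pos by simp_all
        have f4: "z4 = 0" unfolding z4_def k_def by simp
        have nr: "\<forall>u\<in>M. \<not> reduces_distance 4 u (vec4 z1 z2 z3 z4)"
          unfolding Mdef
          by (rule notred_all[OF NB(1)[OF f1 b12 pos(2)] NB(2)[OF f1 b12 pos(2)]
                 NC(1)[OF f1 ca nonneg(2) pos(3)] NC(2)[OF f1 ca nonneg(2) pos(3)]
                 ND1(1)[OF f1 f2 f3(1) f4 DC nonneg(3-5) pos(4)] ND1(2)[OF f1 f2 f3(1) f4 DC nonneg(3-5) pos(4)]])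
        then show False using noW[OF _ vec4_nz3[OF f3(2)] nr] comb_ker[of i j k] w by simp
      qed
    qed
    have B: "(c1 = 0 \<and> c3 < c2) \<or> d1 + d3 < d2 + d4"
    proof (rule ccontr)
      assume nb: "\<not> ((c1 = 0 \<and> c3 < c2) \<or> d1 + d3 < d2 + d4)"
      then have nb1: "\<not> (c1 = 0 \<and> c3 < c2)" and nb2: "d1 + d3 \<ge> d2 + d4" by auto
      define T where "T = c2 + d2 + 1"
      have T1: "T \<ge> 1" unfolding T_def using nonneg by simp
      define i where "i = - (T * (d3 * c1 + c3 * d1))"
      define j where "j = T * (b1 * d3)"
      define k where "k = T * (b1 * c3)"
      define z1 where "z1 = i*b1 + j*c1 + k*d1"
      define z2 where "z2 = (- i)*b2 + j*c2 + k*d2"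
      define z3 where "z3 = (- j)*c3 + k*d3"
      define z4 where "z4 = (- k)*d4"
      have w: "comb i j k = vec4 z1 z2 z3 z4" unfolding comb_def z1_def z2_def z3_def z4_def by simp
      have f1: "z1 = 0" unfolding z1_def i_def j_def k_def by (simp add: algebra_simps)
      have f3: "z3 = 0" unfolding z3_def j_def k_def by (simp add: algebra_simps)
      have "z2 = T * Z" unfolding z2_def i_def j_def k_def Z_def P_def Q_def by (simp add: algebra_simps)
      moreover have "T * Z \<ge> T" using m1[of Z T] Z1 T1 by (simp add: mult.commute)
      ultimately have f2: "z2 \<ge> c2" "z2 \<ge> d2" using T_def nonneg by linarith+
      have "k \<ge> 1" unfolding k_def using m1[of T "b1 * c3"] T1 b1c3 by linarith
      then have "k * d4 \<ge> d4" using m1 pos by simp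
      then have f4: "z4 \<le> - d4" unfolding z4_def by simp
      have nr: "\<forall>u\<in>M. \<not> reduces_distance 4 u (vec4 z1 z2 z3 z4)"
        unfolding Mdef
        by (rule notred_all[OF NB(1)[OF f1 b12 pos(2)] NB(2)[OF f1 b12 pos(2)]
               NWb[OF f1 f3 f2 f4 nb1 nb2 cpos dpos nonneg(1-2) pos(3) nonneg(3-5) pos(4)]])
      have "z4 \<noteq> 0" using f4 pos by linarith
      then show False using noW[OF _ vec4_nz4 nr] comb_ker[of i j k] w by simp
    qed
    have C: "c1 + c2 < c3 \<or> d1 + d2 < d3 + d4"
    proof (rule ccontr)
      assume nc: "\<not> (c1 + c2 < c3 \<or> d1 + d2 < d3 + d4)"
      then have nc1: "c1 + c2 \<ge> c3" and nc2: "d1 + d2 \<ge> d3 + d4" by auto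
      define T where "T = c3 + d3"
      have T1: "T \<ge> 1" unfolding T_def using nonneg pos by simp
      define i where "i = T * (P * d2 - Q * c2)"
      define j where "j = - (T * (Q * b2))"
      define k where "k = T * (P * b2)"
      define z1 where "z1 = i*b1 + j*c1 + k*d1"
      define z2 where "z2 = (- i)*b2 + j*c2 + k*d2"
      define z3 where "z3 = (- j)*c3 + k*d3"
      define z4 where "z4 = (- k)*d4"
      have w: "comb i j k = vec4 z1 z2 z3 z4" unfolding comb_def z1_def z2_def z3_def z4_def by simp
      have f1: "z1 = 0" unfolding z1_def i_def j_def k_def P_def Q_def by (simp add: algebra_simps)
      have f2: "z2 = 0" unfolding z2_def i_def j_def k_def by (simp add: algebra_simps)
      have "z3 = T * (b2 * Z)" unfolding z3_def j_def k_def Z_def by (simp add: algebra_simps)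
      moreover have "b2 * Z \<ge> 1" using m1[of b2 Z] Z1 pos by linarith
      moreover have "T * (b2 * Z) \<ge> T" using m1[of "b2 * Z" T] Z1 T1 calculation(2) by (simp add: mult.commute)
      ultimately have f3: "z3 \<ge> c3" "z3 \<ge> d3" using T_def nonneg pos by linarith+
      have "P * b2 \<ge> 1" using m1[of P b2] P1 pos by linarith
      then have "k \<ge> 1" unfolding k_def using m1[of T "P * b2"] T1 by linarith
      then have "k * d4 \<ge> d4" using m1 pos by simp
      then have f4: "z4 \<le> - d4" unfolding z4_def by simp
      have nr: "\<forall>u\<in>M. \<not> reduces_distance 4 u (vec4 z1 z2 z3 z4)"
        unfolding Mdef
        by (rule notred_all[OF NB(1)[OF f1 b12 pos(2)] NB(2)[OF f1 b12 pos(2)]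
               NWc[OF f1 f2 f3 f4 nc1 nc2 cpos dpos nonneg(1-2) pos(3) nonneg(3-5) pos(4)]])
      have "z4 \<noteq> 0" using f4 pos by linarith
      then show False using noW[OF _ vec4_nz4 nr] comb_ker[of i j k] w by simp
    qed
    show "c1 < c2 + c3 \<and> ((c1 = 0 \<and> c3 < c2) \<or> d1 + d3 < d2 + d4) \<and> (c1 + c2 < c3 \<or> d1 + d2 < d3 + d4)"
      using A B C by blast
  next
    assume H: "c1 < c2 + c3 \<and> ((c1 = 0 \<and> c3 < c2) \<or> d1 + d3 < d2 + d4) \<and> (c1 + c2 < c3 \<or> d1 + d2 < d3 + d4)"
    show "distance_reducing a 4 M"
      unfolding distance_reducing_def
    proof (intro ballI impI)
      fix z assume z: "z \<in> kerA a 4" "z \<noteq> (\<lambda>_. 0)"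
      obtain i j k where zc: "z = comb i j k" using lat[OF z(1)] by blast
      consider "k > 0 \<or> (k = 0 \<and> j > 0) \<or> (k = 0 \<and> j = 0 \<and> i > 0)"
        | "- k > 0 \<or> (- k = 0 \<and> - j > 0) \<or> (- k = 0 \<and> - j = 0 \<and> - i > 0)"
        | "i = 0" "j = 0" "k = 0" by linarith
      then show "\<exists>u\<in>M. reduces_distance 4 u z"
      proof cases
        case 1
        then show ?thesis using posdir H zc by blast
      next
        case 2
        then obtain u where "u \<in> M" "reduces_distance 4 u (comb (- i) (- j) (- k))"
          using posdir H by blast
        then show ?thesis unfolding comb_neg rd_neg zc by blast
      next
        case 3
        then have "z = (\<lambda>_. 0)" unfolding zc comb_def by (auto simp: vec4_def)
        then show ?thesis using z(2) by simp
      qed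
    qed
  qed
qed

end
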